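(* For nonzero integers $n$ define $r(n)=\prod_{p\mid n\text{ prime}}\frac{-p^{4-3\operatorname{ord}_p(n)}}{p^3-p-1}$, and let $S=\prod_{p\text{ prime}}(1-p/(p^3-1))$. For $n\ge1$ put $$S_{1,n}=\sum_{i\ge1}\sum_{\substack{j\ge1\\ n\mid ij}}\frac{\mu(j)}{i^2j\varphi(ij)},\qquad S'_{2,n}=\sum_{\substack{i\ge1\\ 2\mid i}}\ \sum_{\substack{j\ge1\\ n\mid ij}}\frac{\mu(j)}{i^2j\,\varphi(ij)}.$$ Then $S_{1,n}=r(n)S$, and $S'_{2,n}=\frac{3}{10}r(n)S$ if $n$ is odd, while $S'_{2,n}=r(n)S$ if $4\mid n$.
   Context: $\mu$ is the Möbius function, $\varphi$ Euler's totient function, and $\operatorname{ord}_p(n)$ the exponent of the prime $p$ in $n$. *)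

theory Defs
  imports "HOL-Analysis.Analysis" "HOL-Number_Theory.Number_Theory"
    "HOL-Computational_Algebra.Squarefree"
begin

definition moebius_mu :: "nat \<Rightarrow> int" where
  "moebius_mu n = (if n = 0 \<or> \<not> squarefree n then 0 else (-1) ^ card (prime_factors n))"

definition r_fun :: "int \<Rightarrow> real" where
  "r_fun n = (\<Prod>p\<in>prime_factors n.
      - (real_of_int p powi (4 - 3 * int (multiplicity p n))) / (real_of_int p ^ 3 - real_of_int p - 1))"

definition S_const :: real where
  "S_const = (\<Prod>p. if prime (p::nat) then 1 - real p / (real p ^ 3 - 1) else 1)"

definition S1 :: "nat \<Rightarrow> real" where
  "S1 n = (\<Sum>\<^sub>\<infinity>i\<in>{i::nat. i \<ge> 1}.
             \<Sum>\<^sub>\<infinity>j\<in>{j::nat. j \<ge> 1 \<and> n dvd i * j}.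
               real_of_int (moebius_mu j) / (real i ^ 2 * real j * real (totient (i * j))))"

definition S2' :: "nat \<Rightarrow> real" where
  "S2' n = (\<Sum>\<^sub>\<infinity>i\<in>{i::nat. i \<ge> 1 \<and> even i}.
             \<Sum>\<^sub>\<infinity>j\<in>{j::nat. j \<ge> 1 \<and> n dvd i * j}.
               real_of_int (moebius_mu j) / (real i ^ 2 * real j * real (totient (i * j))))"

end

theory Submission
  imports Defs
begin
definition AP :: "nat set \<Rightarrow> (nat \<times> nat) set" where
  "AP P = {(i,j). i > 0 \<and> j > 0 \<and> prime_factors i \<subseteq> P \<and> prime_factors j \<subseteq> P}"

definition pp :: "nat set \<Rightarrow> (nat \<Rightarrow> nat \<times> nat) \<Rightarrow> nat \<times> nat" where
  "pp P x = ((\<Prod>p\<in>P. p ^ fst (x p)), (\<Prod>p\<in>P. p ^ snd (x p)))"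

lemma prime_factors_prodpow:
  assumes "finite P" "\<And>p. p \<in> P \<Longrightarrow> prime p"
  shows "prime_factors (\<Prod>p\<in>P. p ^ f p) \<subseteq> (P::nat set)"
proof
  fix q assume q: "q \<in> prime_factors (\<Prod>p\<in>P. p ^ f p)"
  hence "prime q" "multiplicity q (\<Prod>p\<in>P. p ^ f p) > 0"
    by (auto simp: prime_factors_multiplicity)
  with multiplicity_prod_prime_powers[OF assms, of q f] show "q \<in> P"
    by (auto split: if_splits)
qed

lemma prodpow_pos:
  assumes "finite P" "\<And>p. p \<in> P \<Longrightarrow> prime p"
  shows "(\<Prod>p\<in>P. p ^ f p) > (0::nat)"
  using assms by (auto intro!: prod_pos simp: prime_gt_0_nat)

lemma prodpow_mult_eq:
  assumes "finite P" "(i::nat) > 0" "prime_factors i \<subseteq> P" "\<And>p. p \<in> P \<Longrightarrow> prime p"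
  shows "(\<Prod>p\<in>P. p ^ multiplicity p i) = i"
proof -
  have "(\<Prod>p\<in>P. p ^ multiplicity p i) = (\<Prod>p\<in>prime_factors i. p ^ multiplicity p i)"
  proof (rule prod.mono_neutral_right[OF assms(1) assms(3)], safe)
    fix p assume "p \<in> P" "p \<notin> prime_factors i"
    then have "\<not> p dvd i" using assms(2) assms(4) by (auto simp: in_prime_factors_iff)
    then have "multiplicity p i = 0" by (rule not_dvd_imp_multiplicity_0)
    then show "p ^ multiplicity p i = 1" by simp
  qed
  also have "\<dots> = i" using prime_factorization_nat[OF assms(2)] by simp
  finally show ?thesis .
qed

lemma bij_pp:
  assumes P: "finite P" "\<And>p. p \<in> P \<Longrightarrow> prime p"
  shows "bij_betw (pp P) (PiE P (\<lambda>_. UNIV)) (AP P)"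
proof (rule bij_betw_byWitness[where f' = "\<lambda>(i,j). restrict (\<lambda>p. (multiplicity p i, multiplicity p j)) P"])
  show "\<forall>a\<in>PiE P (\<lambda>_. UNIV). (\<lambda>(i,j). restrict (\<lambda>p. (multiplicity p i, multiplicity p j)) P) (pp P a) = a"
  proof
    fix a assume a: "a \<in> PiE P (\<lambda>_. (UNIV :: (nat\<times>nat) set))"
    show "(\<lambda>(i,j). restrict (\<lambda>p. (multiplicity p i, multiplicity p j)) P) (pp P a) = a"
    proof (rule ext)
      fix q
      show "(\<lambda>(i,j). restrict (\<lambda>p. (multiplicity p i, multiplicity p j)) P) (pp P a) q = a q"
      proof (cases "q \<in> P")
        case True
        then show ?thesis using multiplicity_prod_prime_powers[OF P, of q] P(2)[OF True]
          by (simp add: pp_def)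
      next
        case False
        then show ?thesis using a by (auto simp: pp_def PiE_def extensional_def)
      qed
    qed
  qed
  show "\<forall>a'\<in>AP P. pp P ((\<lambda>(i,j). restrict (\<lambda>p. (multiplicity p i, multiplicity p j)) P) a') = a'"
    using prodpow_mult_eq[OF P(1) _ _ P(2)] by (auto simp: AP_def pp_def)
  show "pp P ` PiE P (\<lambda>_. UNIV) \<subseteq> AP P"
  proof (rule image_subsetI)
    fix x assume "x \<in> PiE P (\<lambda>_. (UNIV :: (nat\<times>nat) set))"
    show "pp P x \<in> AP P"
      using prime_factors_prodpow[OF P, of "\<lambda>p. fst (x p)"] prime_factors_prodpow[OF P, of "\<lambda>p. snd (x p)"]
        prodpow_pos[OF P] by (auto simp: AP_def pp_def)
  qed
  show "(\<lambda>(i,j). restrict (\<lambda>p. (multiplicity p i, multiplicity p j)) P) ` AP P \<subseteq> PiE P (\<lambda>_. UNIV)"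
    by auto
qed

lemma euler_finite:
  fixes g :: "nat \<Rightarrow> nat \<times> nat \<Rightarrow> real"
  assumes P: "finite P" "\<And>p. p \<in> P \<Longrightarrow> prime p"
    and g: "\<And>p. p \<in> P \<Longrightarrow> g p summable_on UNIV"
  shows "((\<lambda>(i,j). \<Prod>p\<in>P. g p (multiplicity p i, multiplicity p j)) has_sum
            (\<Prod>p\<in>P. infsum (g p) UNIV)) (AP P)"
proof -
  have h: "(\<lambda>y. \<bar>g x y\<bar>) summable_on UNIV" if "x \<in> P" for x
      using g[OF that] summable_on_iff_abs_summable_on_real by auto
  have sum: "(\<lambda>x. \<Prod>p\<in>P. g p (x p)) summable_on PiE P (\<lambda>_. UNIV)"
  proof -
    have h': "(\<lambda>y. \<bar>g x y\<bar>) summable_on UNIV" if "x \<in> P" for x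
      using g[OF that] summable_on_iff_abs_summable_on_real by auto
    have "(\<lambda>x. \<bar>\<Prod>p\<in>P. g p (x p)\<bar>) summable_on PiE P (\<lambda>_. UNIV)"
      using abs_summable_on_prod_PiE[of P "\<lambda>_. UNIV" g] P h
      by (simp add: abs_summable_equivalent[symmetric])
    thus ?thesis using summable_on_iff_abs_summable_on_real by auto
  qed
  have val: "infsum (\<lambda>x. \<Prod>p\<in>P. g p (x p)) (PiE P (\<lambda>_. UNIV)) = (\<Prod>p\<in>P. infsum (g p) UNIV)"
    by (rule infsum_prod_PiE_abs[OF P(1)]) (use h in auto)
  have hs: "((\<lambda>x. \<Prod>p\<in>P. g p (x p)) has_sum (\<Prod>p\<in>P. infsum (g p) UNIV)) (PiE P (\<lambda>_. UNIV))"
    using sum val has_sum_infsum by fastforce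
  have eq: "(\<lambda>(i,j). \<Prod>p\<in>P. g p (multiplicity p i, multiplicity p j)) (pp P x) = (\<Prod>p\<in>P. g p (x p))"
    if "x \<in> PiE P (\<lambda>_. UNIV)" for x
    unfolding pp_def using multiplicity_prod_prime_powers[OF P] P(2)
    by (auto intro!: prod.cong)
  have "((\<lambda>x. (\<lambda>(i,j). \<Prod>p\<in>P. g p (multiplicity p i, multiplicity p j)) (pp P x)) has_sum (\<Prod>p\<in>P. infsum (g p) UNIV)) (PiE P (\<lambda>_. UNIV))"
    using hs by (rule has_sum_cong[THEN iffD2, rotated]) (use eq in auto)
  thus ?thesis using has_sum_reindex_bij_betw[OF bij_pp[OF P]] by blast
qed

lemma infsum_exhaust:
  fixes f :: "'a \<Rightarrow> real"
  assumes sf: "f summable_on D" and sub: "\<And>N. A N \<subseteq> D"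
    and ev: "\<And>K. finite K \<Longrightarrow> K \<subseteq> D \<Longrightarrow> eventually (\<lambda>N. K \<subseteq> A N) sequentially"
  shows "(\<lambda>N. infsum f (A N)) \<longlonglongrightarrow> infsum f D"
proof (rule LIMSEQ_I)
  fix \<epsilon> :: real assume "\<epsilon> > 0"
  have sa: "(\<lambda>x. \<bar>f x\<bar>) summable_on D" using sf summable_on_iff_abs_summable_on_real by auto
  obtain K where K: "finite K" "K \<subseteq> D" "dist (sum (\<lambda>x. \<bar>f x\<bar>) K) (infsum (\<lambda>x. \<bar>f x\<bar>) D) \<le> \<epsilon>/2"
    using infsum_finite_approximation[OF sa, of "\<epsilon>/2"] \<open>\<epsilon> > 0\<close> by auto
  from ev[OF K(1,2)] obtain N0 where N0: "\<And>N. N \<ge> N0 \<Longrightarrow> K \<subseteq> A N"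
    by (auto simp: eventually_sequentially)
  show "\<exists>no. \<forall>n\<ge>no. norm (infsum f (A n) - infsum f D) < \<epsilon>"
  proof (intro exI allI impI)
    fix N assume "N \<ge> N0"
    hence KA: "K \<subseteq> A N" by (rule N0)
    have sA: "f summable_on A N" by (rule summable_on_subset_banach[OF sf sub])
    have sDA: "f summable_on D - A N" by (rule summable_on_subset_banach[OF sf]) auto
    have saDA: "(\<lambda>x. \<bar>f x\<bar>) summable_on D - A N" by (rule summable_on_subset_banach[OF sa]) auto
    have saDK: "(\<lambda>x. \<bar>f x\<bar>) summable_on D - K" by (rule summable_on_subset_banach[OF sa]) auto
    have "A N \<union> (D - A N) = D" using sub[of N] by blast
    hence "infsum f D = infsum f (A N \<union> (D - A N))" by simp
    also have "\<dots> = infsum f (A N) + infsum f (D - A N)"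
      by (rule infsum_Un_disjoint[OF sA sDA]) auto
    finally have e1: "infsum f (A N) - infsum f D = - infsum f (D - A N)" by simp
    have "\<bar>infsum f (D - A N)\<bar> \<le> infsum (\<lambda>x. \<bar>f x\<bar>) (D - A N)"
      using norm_infsum_bound[of f "D - A N"] saDA by auto
    also have "\<dots> \<le> infsum (\<lambda>x. \<bar>f x\<bar>) (D - K)"
      by (rule infsum_mono_neutral[OF saDA saDK]) (use KA in auto)
    also have "K \<union> (D - K) = D" using K(2) by blast
    hence "infsum (\<lambda>x. \<bar>f x\<bar>) D = infsum (\<lambda>x. \<bar>f x\<bar>) (K \<union> (D - K))" by simp
    hence "infsum (\<lambda>x. \<bar>f x\<bar>) D = sum (\<lambda>x. \<bar>f x\<bar>) K + infsum (\<lambda>x. \<bar>f x\<bar>) (D - K)"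
      using infsum_Un_disjoint[OF _ saDK, of K] K(1) by auto
    hence "infsum (\<lambda>x. \<bar>f x\<bar>) (D - K) \<le> \<epsilon>/2" using K(3) by (auto simp: dist_real_def)
    finally show "norm (infsum f (A N) - infsum f D) < \<epsilon>" using e1 \<open>\<epsilon> > 0\<close> by simp
  qed
qed

lemma geo_tail_has_sum:
  fixes x :: real
  assumes "0 \<le> x" "x < 1"
  shows "((\<lambda>a::nat. if k \<le> a then x ^ a else 0) has_sum (x ^ k / (1 - x))) UNIV"
proof -
  have "(\<lambda>i. x ^ k * x ^ i) sums (x ^ k * (1 / (1 - x)))"
    by (rule sums_mult) (rule geometric_sums, use assms in auto)
  hence "(\<lambda>i. (\<lambda>a::nat. if k \<le> a then x ^ a else 0) (i + k)) sums (x ^ k / (1 - x))"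
    by (simp add: power_add mult.commute)
  hence "(\<lambda>a::nat. if k \<le> a then x ^ a else 0) sums (x ^ k / (1 - x))"
    by (subst (asm) sums_zero_iff_shift) auto
  thus ?thesis by (rule sums_nonneg_imp_has_sum) (use assms in auto)
qed

lemma single_has_sum:
  "((\<lambda>a::nat. if a = 0 then (c::real) else 0) has_sum c) UNIV"
proof -
  have "((\<lambda>a::nat. if a = 0 then (c::real) else 0) has_sum c) {0}" by (rule has_sum_finiteI) auto
  thus ?thesis by (rule has_sum_cong_neutral[THEN iffD1, rotated -1]) auto
qed

definition gl :: "real \<Rightarrow> bool \<Rightarrow> nat \<Rightarrow> nat \<Rightarrow> nat \<times> nat \<Rightarrow> real" where
  "gl s c e p ab = (case ab of (a,b) \<Rightarrow>
     if (c \<longrightarrow> a \<ge> 1) \<and> e \<le> a + b \<and> b \<le> 1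
     then s ^ b / (real p ^ (2*a+b) * real (totient (p^(a+b)))) else 0)"

lemma totient_pp_real:
  assumes "prime p"
  shows "real (totient (p ^ Suc m)) = real p ^ m * (real p - 1)"
  using totient_prime_power_Suc[OF assms, of m] assms prime_gt_1_nat[OF assms]
  by (simp add: of_nat_diff)

lemma gl_u:
  fixes s :: real and c :: bool and e :: nat
  assumes p: "prime p"
  defines "x \<equiv> 1 / real p ^ 3"
  defines "k0 \<equiv> max e (if c then 1 else 0)"
  shows "gl s c e p (a, 0) = (if k0 \<le> a then real p / (real p - 1) * x ^ a else 0)
                             + (if a = 0 then (if k0 = 0 then 1 - real p / (real p - 1) else 0) else 0)"
proof -
  have p1: "real p > 1" using prime_gt_1_nat[OF p] by simp
  show ?thesis
  proof (cases a)
    case 0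
    then show ?thesis using p1 by (auto simp: gl_def k0_def)
  next
    case (Suc m)
    have "real p ^ (2 * a) * real p ^ m * real p = real p ^ (2 * a + m + 1)"
      by (simp only: power_add power_one_right)
    also have "2 * a + m + 1 = 3 * a" using Suc by simp
    finally have e1: "real p ^ (2 * a) * real p ^ m * real p = real p ^ (3 * a)" .
    have e2: "x ^ a = 1 / real p ^ (3 * a)" unfolding x_def by (simp add: power_one_over power_mult)
    have "1 / (real p ^ (2 * a) * (real p ^ m * (real p - 1))) = real p / (real p - 1) * x ^ a"
    proof -
      have "1 / (real p ^ (2 * a) * (real p ^ m * (real p - 1))) = real p / (real p ^ (2 * a) * real p ^ m * real p * (real p - 1))"
        using p1 by (simp add: field_simps)
      also have "\<dots> = real p / (real p - 1) * x ^ a" unfolding e1 e2 using p1 by simp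
      finally show ?thesis .
    qed
    then show ?thesis using Suc totient_pp_real[OF p, of m]
      by (auto simp: gl_def k0_def)
  qed
qed

lemma gl_v:
  fixes s :: real and c :: bool and e :: nat
  assumes p: "prime p"
  defines "x \<equiv> 1 / real p ^ 3"
  defines "k1 \<equiv> max (e - 1) (if c then 1 else 0)"
  shows "gl s c e p (a, 1) = (if k1 \<le> a then s / (real p * (real p - 1)) * x ^ a else 0)"
proof -
  have p1: "real p > 1" using prime_gt_1_nat[OF p] by simp
  have "real p ^ (2 * a + 1) * real p ^ a = real p ^ (2 * a + 1 + a)"
    by (simp only: power_add)
  also have "2 * a + 1 + a = 1 + 3 * a" by simp
  finally have e1: "real p ^ (2 * a + 1) * real p ^ a = real p * real p ^ (3 * a)"
    by (simp only: power_add power_one_right)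
  have e2: "x ^ a = 1 / real p ^ (3 * a)" unfolding x_def by (simp add: power_one_over power_mult)
  have "s / (real p ^ (2 * a + 1) * (real p ^ a * (real p - 1))) = s / (real p * (real p - 1)) * x ^ a"
  proof -
    have "s / (real p ^ (2 * a + 1) * (real p ^ a * (real p - 1))) = s / ((real p ^ (2 * a + 1) * real p ^ a) * (real p - 1))"
      by (simp only: mult.assoc)
    also have "\<dots> = s / (real p * (real p - 1)) * x ^ a" unfolding e1 e2 using p1 by simp
    finally show ?thesis .
  qed
  then show ?thesis using totient_pp_real[OF p, of a]
    by (auto simp: gl_def k1_def)
qed

lemma gl_has_sum:
  fixes s :: real and c :: bool and e :: nat
  assumes p: "prime p"
  defines "x \<equiv> 1 / real p ^ 3"
  defines "k0 \<equiv> max e (if c then 1 else 0)"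
  defines "k1 \<equiv> max (e - 1) (if c then 1 else 0)"
  shows "(gl s c e p has_sum (real p / (real p - 1) * (x ^ k0 / (1 - x))
            + (if k0 = 0 then 1 - real p / (real p - 1) else 0)
            + s / (real p * (real p - 1)) * (x ^ k1 / (1 - x)))) UNIV"
proof -
  have p1: "real p > 1" using prime_gt_1_nat[OF p] by simp
  have x0: "0 \<le> x" unfolding x_def by simp
  have x1: "x < 1" unfolding x_def using p1 by (simp add: power_gt1_lemma)
  define U where "U = real p / (real p - 1) * (x ^ k0 / (1 - x)) + (if k0 = 0 then 1 - real p / (real p - 1) else 0)"
  define V where "V = s / (real p * (real p - 1)) * (x ^ k1 / (1 - x))"
  have "((\<lambda>a. real p / (real p - 1) * (if k0 \<le> a then x ^ a else 0) + (if a = 0 then (if k0 = 0 then 1 - real p / (real p - 1) else 0) else 0)) has_sum U) UNIV"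
    unfolding U_def by (rule has_sum_add[OF has_sum_cmult_right[OF geo_tail_has_sum[OF x0 x1]] single_has_sum])
  hence hu: "((\<lambda>a. gl s c e p (a, 0)) has_sum U) UNIV"
    by (rule has_sum_cong[THEN iffD1, rotated]) (simp add: gl_u[OF p] x_def k0_def)
  have "((\<lambda>a. s / (real p * (real p - 1)) * (if k1 \<le> a then x ^ a else 0)) has_sum V) UNIV"
    unfolding V_def by (rule has_sum_cmult_right[OF geo_tail_has_sum[OF x0 x1]])
  hence hv: "((\<lambda>a. gl s c e p (a, 1)) has_sum V) UNIV"
    by (rule has_sum_cong[THEN iffD1, rotated]) (unfold gl_v[OF p], simp add: x_def k1_def)
  have h0: "(gl s c e p has_sum U) (range (\<lambda>a. (a, 0::nat)))"
    using has_sum_reindex[of "\<lambda>a. (a, 0::nat)" UNIV "gl s c e p" U] hu by (simp add: o_def inj_on_def)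
  have h1: "(gl s c e p has_sum V) (range (\<lambda>a. (a, 1::nat)))"
    using has_sum_reindex[of "\<lambda>a. (a, 1::nat)" UNIV "gl s c e p" V] hv by (simp add: o_def inj_on_def)
  have "(gl s c e p has_sum (U + V)) (range (\<lambda>a. (a, 0::nat)) \<union> range (\<lambda>a. (a, 1::nat)))"
    by (rule has_sum_Un_disjoint[OF h0 h1]) auto
  hence "(gl s c e p has_sum (U + V)) UNIV"
  proof (rule has_sum_cong_neutral[THEN iffD1, rotated -1])
    fix ab :: "nat \<times> nat" assume "ab \<in> UNIV - (range (\<lambda>a. (a, 0::nat)) \<union> range (\<lambda>a. (a, 1::nat)))"
    then obtain a b where ab: "ab = (a, b)" "b \<noteq> 0" "b \<noteq> 1" by (cases ab) auto
    thus "gl s c e p ab = 0" by (auto simp: gl_def)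
  qed auto
  thus ?thesis unfolding U_def V_def by simp
qed

lemma gl_summable:
  assumes "prime p" shows "gl s c e p summable_on UNIV"
  using gl_has_sum[OF assms] by (auto simp: summable_on_def)

lemma alg0:
  fixes P :: real assumes "P \<ge> 2"
  shows "P / (P - 1) * (1 / (1 - 1 / P ^ 3)) + (1 - P / (P - 1)) + (-1) / (P * (P - 1)) * (1 / (1 - 1 / P ^ 3))
         = 1 - P / (P ^ 3 - 1)"
proof -
  have p8: "P ^ 3 \<ge> 8" using power_mono[OF assms, of 3] by simp
  define R where "R = P ^ 3 - 1"
  define S where "S = P - 1"
  have a: "R \<noteq> 0" "S \<noteq> 0" "P \<noteq> 0" using p8 assms by (auto simp: R_def S_def)
  have b: "1 / (1 - 1 / P ^ 3) = (R + 1) / R" using a by (simp add: R_def field_simps)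
  have "P / S * ((R + 1) / R) + (1 - P / S) + (-1) / (P * S) * ((R + 1) / R) = 1 - P / R"
    using a apply (simp add: field_simps)
    by (simp add: R_def S_def algebra_simps power3_eq_cube)
  thus ?thesis unfolding b by (simp add: R_def S_def)
qed

lemma loc0:
  assumes p: "prime p"
  shows "infsum (gl (-1) False 0 p) UNIV = 1 - real p / (real p ^ 3 - 1)"
proof -
  have p2: "real p \<ge> 2" using prime_ge_2_nat[OF p] by linarith
  have "infsum (gl (-1) False 0 p) UNIV = real p / (real p - 1) * (1 / (1 - 1 / real p ^ 3)) + (1 - real p / (real p - 1)) + (-1) / (real p * (real p - 1)) * (1 / (1 - 1 / real p ^ 3))"
    using infsumI[OF gl_has_sum[OF p, of "-1" False 0]] by simp
  also have "\<dots> = 1 - real p / (real p ^ 3 - 1)" by (rule alg0[OF p2])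
  finally show ?thesis .
qed

lemma loc1:
  assumes p: "prime p"
  shows "infsum (gl (-1) False (Suc m) p) UNIV
     = (1 - real p / (real p ^ 3 - 1)) * (- (real p ^ 4 * (1 / real p ^ 3) ^ Suc m) / (real p ^ 3 - real p - 1))"
proof -
  define P where "P = real p"
  have p2: "P \<ge> 2" using prime_ge_2_nat[OF p] unfolding P_def by linarith
  have p8: "P ^ 3 \<ge> 4 * P" using mult_mono[OF power_mono[OF p2, of 2] order.refl, of P] p2
    by (simp add: power3_eq_cube power2_eq_square)
  define x where "x = 1 / P ^ 3"
  define y where "y = x ^ m"
  define R where "R = P ^ 3 - 1"
  define S where "S = P - 1"
  define T where "T = P ^ 3 - P - 1"
  define Q where "Q = P ^ 3"
  have a: "R \<noteq> 0" "S \<noteq> 0" "P \<noteq> 0" "T \<noteq> 0" "Q \<noteq> 0" using p8 p2 by (auto simp: R_def S_def T_def Q_def)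
  have x1: "x / (1 - x) = 1 / R" "1 / (1 - x) = Q / R" "x = 1 / Q"
    using a by (auto simp: x_def R_def Q_def field_simps)
  have "infsum (gl (-1) False (Suc m) p) UNIV = P / S * (x * y / (1 - x)) + (-1) / (P * S) * (y / (1 - x))"
    using infsumI[OF gl_has_sum[OF p, of "-1" False "Suc m"]] by (simp add: P_def S_def x_def y_def)
  also have "\<dots> = P / S * (x / (1 - x)) * y + (-1) / (P * S) * (1 / (1 - x)) * y" by simp
  also have "\<dots> = P / S * (1 / R) * y + (-1) / (P * S) * (Q / R) * y" unfolding x1(1,2) ..
  also have "\<dots> = (1 - P / R) * (- (P ^ 4 * (1 / Q * y)) / T)"
    using a apply (simp add: field_simps)
    by (simp add: R_def S_def T_def Q_def algebra_simps power3_eq_cube power4_eq_xxxx)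
  also have "\<dots> = (1 - real p / (real p ^ 3 - 1)) * (- (real p ^ 4 * (1 / real p ^ 3) ^ Suc m) / (real p ^ 3 - real p - 1))"
    unfolding x1(3)[symmetric] y_def by (simp add: x_def R_def T_def P_def)
  finally show ?thesis .
qed

lemma loc2:
  shows "infsum (gl (-1) True 0 2) UNIV = 3 / 10 * (1 - real 2 / (real 2 ^ 3 - 1))"
  using infsumI[OF gl_has_sum[OF two_is_prime_nat, of "-1" True 0]] by simp

lemma locabs:
  assumes p: "prime p"
  shows "infsum (gl 1 False 0 p) UNIV \<le> 1 + 2 / (real p * (real p - 1))"
proof -
  define P where "P = real p"
  have p2: "P \<ge> 2" using prime_ge_2_nat[OF p] unfolding P_def by linarith
  have p8: "P ^ 3 \<ge> 4 * P" using mult_mono[OF power_mono[OF p2, of 2] order.refl, of P] p2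
    by (simp add: power3_eq_cube power2_eq_square)
  define R where "R = P ^ 3 - 1"
  define S where "S = P - 1"
  have a: "R > 0" "S > 0" "P > 0" "R + 1 \<noteq> 0" using p8 p2 by (auto simp: R_def S_def)
  have x1: "1 / (1 - 1 / P ^ 3) = (R + 1) / R"
    using a by (auto simp: R_def field_simps)
  have "infsum (gl 1 False 0 p) UNIV = P / S * (1 / (1 - 1 / P ^ 3)) + (1 - P / S) + 1 / (P * S) * (1 / (1 - 1 / P ^ 3))"
    using infsumI[OF gl_has_sum[OF p, of 1 False 0]] by (simp add: P_def S_def)
  also have "\<dots> = 1 + (P * P + P) / (S * R)"
    unfolding x1 using a apply (simp add: field_simps)
    by (simp add: R_def S_def algebra_simps power3_eq_cube)
  also have "\<dots> \<le> 1 + 2 / (P * S)"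
  proof -
    have "P * P \<ge> 2 * 2" using mult_mono[OF p2 p2] p2 by simp
    hence "P * P * (P - 1) \<ge> 4 * 1" using mult_mono[of 4 "P * P" 1 "P - 1"] p2 by simp
    hence h: "P * P * P - P * P \<ge> 4" by (simp add: algebra_simps)
    have "(P * P + P) * P \<le> 2 * R" using h unfolding R_def power3_eq_cube by (simp add: algebra_simps)
    hence "(P * P + P) * P * S \<le> 2 * R * S" using a by (intro mult_right_mono) auto
    hence "(P * P + P) * (P * S) \<le> 2 * (S * R)" by (simp add: ac_simps)
    hence "(P * P + P) / (S * R) \<le> 2 / (P * S)" using a by (simp add: field_simps)
    thus ?thesis by simp
  qed
  finally show ?thesis by (simp add: P_def S_def)
qed

lemma totient_prodpow:
  assumes "finite P" "\<And>p. p \<in> P \<Longrightarrow> prime p"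
  shows "totient (\<Prod>p\<in>P. p ^ f p) = (\<Prod>p\<in>P. totient (p ^ f p))"
  using assms
proof (induction P rule: finite_induct)
  case (insert q Q)
  have "coprime (q ^ f q) (\<Prod>p\<in>Q. p ^ f p)"
  proof (rule prod_coprime_right)
    fix p assume "p \<in> Q"
    hence "coprime q p" using insert by (intro primes_coprime) auto
    thus "coprime (q ^ f q) (p ^ f p)" by simp
  qed
  thus ?case using insert by (simp add: totient_mult_coprime)
qed simp

definition Tg :: "real \<Rightarrow> bool \<Rightarrow> nat \<Rightarrow> nat \<times> nat \<Rightarrow> real" where
  "Tg s ev n ij = (case ij of (i,j) \<Rightarrow>
     if (ev \<longrightarrow> even i) \<and> n dvd i * j \<and> squarefree j
     then s ^ card (prime_factors j) / (real i ^ 2 * real j * real (totient (i * j))) else 0)"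

lemma Tg_factor:
  assumes P: "finite P" "\<And>p. p \<in> P \<Longrightarrow> prime p"
    and ij: "(i, j) \<in> AP P" and n: "n > 0" "prime_factors n \<subseteq> P" and ev2: "ev \<longrightarrow> 2 \<in> P"
  shows "Tg s ev n (i, j) = (\<Prod>p\<in>P. gl s (ev \<and> p = 2) (multiplicity p n) p (multiplicity p i, multiplicity p j))"
proof -
  from ij have i0: "i > 0" and j0: "j > 0" and pi: "prime_factors i \<subseteq> P" and pj: "prime_factors j \<subseteq> P"
    by (auto simp: AP_def)
  define a where "a p = multiplicity p i" for p
  define b where "b p = multiplicity p j" for p
  have outside: "multiplicity p m = 0" if "prime p" "p \<notin> P" "m > 0" "prime_factors m \<subseteq> P" for p m :: nat
  proof -
    have "p \<notin> prime_factors m" using that by blast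
    hence "\<not> p dvd m" using that by (auto simp: in_prime_factors_iff)
    thus ?thesis by (rule not_dvd_imp_multiplicity_0)
  qed
  have multij: "multiplicity p (i * j) = a p + b p" if "prime p" for p
    using prime_elem_multiplicity_mult_distrib[of p i j] that i0 j0 by (simp add: a_def b_def)
  define cond where "cond p \<longleftrightarrow> ((ev \<and> p = 2) \<longrightarrow> a p \<ge> 1) \<and> multiplicity p n \<le> a p + b p \<and> b p \<le> 1" for p
  have c1: "(ev \<longrightarrow> even i) \<longleftrightarrow> (ev \<longrightarrow> a 2 \<ge> 1)"
    using i0 multiplicity_gt_zero_iff[of i 2] by (auto simp: a_def)
  have c2: "n dvd i * j \<longleftrightarrow> (\<forall>p\<in>P. multiplicity p n \<le> a p + b p)"
  proof
    assume dv: "n dvd i * j"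
    show "\<forall>p\<in>P. multiplicity p n \<le> a p + b p"
    proof
      fix p assume p: "p \<in> P"
      have "multiplicity p n \<le> multiplicity p (i * j)"
        by (rule dvd_imp_multiplicity_le) (use dv i0 j0 in auto)
      thus "multiplicity p n \<le> a p + b p" using multij[OF P(2)[OF p]] by simp
    qed
  next
    assume h: "\<forall>p\<in>P. multiplicity p n \<le> a p + b p"
    show "n dvd i * j"
    proof (rule multiplicity_le_imp_dvd)
      show "n \<noteq> 0" using n by simp
      fix p :: nat assume "prime p"
      thus "multiplicity p n \<le> multiplicity p (i * j)"
        using h multij outside[of p n] n by (cases "p \<in> P") auto
    qed
  qed
  have c3: "squarefree j \<longleftrightarrow> (\<forall>p\<in>P. b p \<le> 1)"
    using squarefree_factorial_semiring''[of j] j0 outside[of _ j] pj P(2) by (auto simp: b_def)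
  have call: "((ev \<longrightarrow> even i) \<and> n dvd i * j \<and> squarefree j) \<longleftrightarrow> (\<forall>p\<in>P. cond p)"
    unfolding c1 c2 c3 cond_def using ev2 by auto
  have gl_eq: "gl s (ev \<and> p = 2) (multiplicity p n) p (multiplicity p i, multiplicity p j)
        = (if cond p then s ^ b p / (real p ^ (2 * a p + b p) * real (totient (p ^ (a p + b p)))) else 0)" for p
    unfolding gl_def cond_def a_def b_def by (simp only: prod.case)
  show ?thesis
  proof (cases "\<forall>p\<in>P. cond p")
    case False
    then obtain q where q: "q \<in> P" "\<not> cond q" by auto
    have "(\<Prod>p\<in>P. gl s (ev \<and> p = 2) (multiplicity p n) p (multiplicity p i, multiplicity p j)) = 0"
      using q P(1) by (auto simp: gl_eq intro!: prod_zero)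
    moreover have "Tg s ev n (i, j) = 0" using False call by (auto simp: Tg_def)
    ultimately show ?thesis by simp
  next
    case True
    hence sqf: "squarefree j" and cnd: "(ev \<longrightarrow> even i) \<and> n dvd i * j" using call by auto
    have ei: "(\<Prod>p\<in>P. p ^ a p) = i" using prodpow_mult_eq[OF P(1) i0 pi P(2)] by (simp add: a_def)
    have ej: "(\<Prod>p\<in>P. p ^ b p) = j" using prodpow_mult_eq[OF P(1) j0 pj P(2)] by (simp add: b_def)
    have eij: "i * j = (\<Prod>p\<in>P. p ^ (a p + b p))"
      unfolding ei[symmetric] ej[symmetric] by (simp add: power_add prod.distrib)
    have tot: "real (totient (i * j)) = (\<Prod>p\<in>P. real (totient (p ^ (a p + b p))))"
    proof -
      have "totient (i * j) = (\<Prod>p\<in>P. totient (p ^ (a p + b p)))" unfolding eij by (rule totient_prodpow[OF P])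
      thus ?thesis by (simp add: of_nat_prod)
    qed
    have den: "real i ^ 2 * real j = (\<Prod>p\<in>P. real p ^ (2 * a p + b p))"
      unfolding ei[symmetric] ej[symmetric]
      by (simp add: power_add prod.distrib power_mult prod_power_distrib[symmetric] mult.commute)
    have bsq: "b p \<le> 1" if "p \<in> P" for p using True that by (auto simp: cond_def)
    have card: "card (prime_factors j) = (\<Sum>p\<in>P. b p)"
    proof -
      have "prime_factors j = {p\<in>P. b p = 1}"
      proof (rule subset_antisym; rule subsetI)
          fix x assume x: "x \<in> prime_factors j"
          hence xP: "x \<in> P" using pj by blast
          have "b x > 0" using x j0 by (auto simp: b_def prime_factors_multiplicity)
          thus "x \<in> {p\<in>P. b p = 1}" using bsq[OF xP] xP by simp
        next
          fix x assume "x \<in> {p\<in>P. b p = 1}"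
          thus "x \<in> prime_factors j" using P(2) j0 by (auto simp: b_def prime_factors_multiplicity)
      qed
      hence "card (prime_factors j) = (\<Sum>p\<in>{p\<in>P. b p = 1}. 1)" by simp
      also have "\<dots> = (\<Sum>p\<in>P. b p)"
      proof -
        have "(\<Sum>p\<in>P. b p) = (\<Sum>p\<in>{p\<in>P. b p = 1}. b p)"
          by (rule sum.mono_neutral_right[OF P(1)]) (use bsq in force)+
        thus ?thesis by simp
      qed
      finally show ?thesis .
    qed
    have "Tg s ev n (i, j) = s ^ (\<Sum>p\<in>P. b p) / (real i ^ 2 * real j * real (totient (i * j)))"
      using sqf cnd by (simp add: Tg_def card)
    also have "\<dots> = (\<Prod>p\<in>P. s ^ b p) / ((\<Prod>p\<in>P. real p ^ (2 * a p + b p)) * (\<Prod>p\<in>P. real (totient (p ^ (a p + b p)))))"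
      by (simp add: power_sum den tot)
    also have "\<dots> = (\<Prod>p\<in>P. s ^ b p / (real p ^ (2 * a p + b p) * real (totient (p ^ (a p + b p)))))"
      by (simp add: prod.distrib prod_dividef)
    also have "\<dots> = (\<Prod>p\<in>P. gl s (ev \<and> p = 2) (multiplicity p n) p (multiplicity p i, multiplicity p j))"
      using True by (auto simp: gl_eq intro!: prod.cong)
    finally show ?thesis .
  qed
qed

lemma mult_int:
  assumes p: "prime p" and n: "n > 0"
  shows "multiplicity (int p) (int n) = multiplicity p n"
proof (rule multiplicity_eqI)
  have "p ^ multiplicity p n dvd n" by (rule multiplicity_dvd)
  thus "int p ^ multiplicity p n dvd int n" by (metis of_nat_dvd_iff of_nat_power)
  have "\<not> p ^ Suc (multiplicity p n) dvd n"
    using power_dvd_iff_le_multiplicity[of n p "Suc (multiplicity p n)"] p n prime_gt_1_nat[OF p]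
    by auto
  thus "\<not> int p ^ Suc (multiplicity p n) dvd int n" by (metis of_nat_dvd_iff of_nat_power)
qed

lemma pf_int:
  shows "prime_factors (int n) = int ` prime_factors n"
proof (rule subset_antisym; rule subsetI)
  fix x assume x: "x \<in> prime_factors (int n)"
  hence px: "prime x" and dx: "x dvd int n" and n0: "n \<noteq> 0" by (auto simp: in_prime_factors_iff)
  have xe: "x = int (nat x)" using prime_ge_0_int[OF px] by simp
  have "prime (nat x)" using px by simp
  moreover have "int (nat x) dvd int n" using dx xe by simp
  hence "nat x dvd n" by (simp only: of_nat_dvd_iff)
  ultimately have "nat x \<in> prime_factors n" using n0 by (auto simp: in_prime_factors_iff)
  thus "x \<in> int ` prime_factors n" using xe by (intro image_eqI[of _ _ "nat x"]) auto
next
  fix x assume "x \<in> int ` prime_factors n"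
  then obtain p where "x = int p" "p \<in> prime_factors n" by auto
  thus "x \<in> prime_factors (int n)" by (auto simp: in_prime_factors_iff)
qed

definition rho :: "nat \<Rightarrow> nat \<Rightarrow> real" where
  "rho n p = - (real p ^ 4 * (1 / real p ^ 3) ^ multiplicity p n) / (real p ^ 3 - real p - 1)"

lemma r_fun_eq:
  assumes n: "n > 0"
  shows "r_fun (int n) = (\<Prod>p\<in>prime_factors n. rho n p)"
proof -
  have "r_fun (int n) = (\<Prod>q\<in>int ` prime_factors n.
      - (real_of_int q powi (4 - 3 * int (multiplicity q (int n)))) / (real_of_int q ^ 3 - real_of_int q - 1))"
    unfolding r_fun_def pf_int ..
  also have "\<dots> = (\<Prod>p\<in>prime_factors n.
      - (real p powi (4 - 3 * int (multiplicity (int p) (int n)))) / (real p ^ 3 - real p - 1))"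
    by (subst prod.reindex) (auto simp: inj_on_def)
  also have "\<dots> = (\<Prod>p\<in>prime_factors n. rho n p)"
  proof (rule prod.cong[OF refl])
    fix p assume p: "p \<in> prime_factors n"
    hence pp: "prime p" by auto
    hence p0: "real p \<noteq> 0" by (auto simp: prime_gt_0_nat)
    have "real p powi (4 - 3 * int (multiplicity (int p) (int n))) = real p powi (4 - int (3 * multiplicity p n))"
      using mult_int[OF pp n] by simp
    also have "\<dots> = real p powi 4 / real p powi (int (3 * multiplicity p n))"
      by (rule power_int_diff) (use p0 in auto)
    also have "\<dots> = real p ^ 4 / real p ^ (3 * multiplicity p n)"
      by (simp only: power_int_of_nat power_int_numeral)
    also have "\<dots> = real p ^ 4 * (1 / real p ^ 3) ^ multiplicity p n"
      by (simp add: power_mult power_one_over)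
    finally show "- (real p powi (4 - 3 * int (multiplicity (int p) (int n)))) / (real p ^ 3 - real p - 1) = rho n p"
      by (simp add: rho_def)
  qed
  finally show ?thesis .
qed

definition PN :: "nat \<Rightarrow> nat set" where "PN N = {p. prime p \<and> p \<le> N}"

lemma PN_finite: "finite (PN N)" unfolding PN_def by auto

lemma S_const_lim:
  "(\<lambda>N. \<Prod>p\<in>PN N. (1 - real p / (real p ^ 3 - 1))) \<longlonglongrightarrow> S_const"
proof -
  define z where "z k = (if prime k then - (real k / (real k ^ 3 - 1)) else 0)" for k :: nat
  have h: "(\<lambda>k. if prime (k::nat) then 1 - real k / (real k ^ 3 - 1) else 1) = (\<lambda>k. 1 + z k)"
    by (auto simp: z_def)
  have bound: "\<bar>z k\<bar> \<le> 2 * inverse (real k ^ 2)" for k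
  proof (cases "prime k")
    case True
    define K where "K = real k"
    have k2: "K \<ge> 2" using prime_ge_2_nat[OF True] unfolding K_def by linarith
    have k8: "K ^ 3 \<ge> 8" using power_mono[OF k2, of 3] by simp
    have "K * K ^ 2 \<le> 2 * (K ^ 3 - 1)" using k8 by (simp add: power2_eq_square power3_eq_cube)
    hence "K / (K ^ 3 - 1) \<le> 2 * inverse (K ^ 2)" using k2 k8
      by (simp add: field_simps)
    thus ?thesis using True k8 by (simp add: z_def K_def)
  qed (simp add: z_def)
  have "summable (\<lambda>k. \<bar>z k\<bar>)"
    by (rule summable_comparison_test'[where g = "\<lambda>k. 2 * inverse (real k ^ 2)"])
       (use bound inverse_power_summable[of 2, where 'a = real] in \<open>auto intro: summable_mult\<close>)
  moreover have "z k \<noteq> -1" for k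
  proof (cases "prime k")
    case True
    define K where "K = real k"
    have k2: "K \<ge> 2" using prime_ge_2_nat[OF True] unfolding K_def by linarith
    have k8: "K ^ 3 \<ge> 4 * K" using mult_mono[OF power_mono[OF k2, of 2] order.refl, of K] k2
      by (simp add: power3_eq_cube power2_eq_square)
    have "K / (K ^ 3 - 1) < 1" using k8 k2 by (simp add: field_simps)
    thus ?thesis using True by (auto simp: z_def K_def)
  qed (simp add: z_def)
  ultimately have "convergent_prod (\<lambda>k. 1 + z k)" by (rule summable_imp_convergent_prod_real)
  hence "(\<lambda>N. \<Prod>k\<le>N. 1 + z k) \<longlonglongrightarrow> prodinf (\<lambda>k. 1 + z k)" by (rule convergent_prod_LIMSEQ)
  moreover have "prodinf (\<lambda>k. 1 + z k) = S_const" unfolding S_const_def h ..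
  moreover have "(\<Prod>k\<le>N. 1 + z k) = (\<Prod>p\<in>PN N. (1 - real p / (real p ^ 3 - 1)))" for N
  proof -
    have "(\<Prod>k\<le>N. 1 + z k) = (\<Prod>k\<in>{..N}. if prime k then 1 - real k / (real k ^ 3 - 1) else 1)"
      by (auto simp: z_def intro!: prod.cong)
    also have "\<dots> = (\<Prod>k\<in>{k\<in>{..N}. prime k}. 1 - real k / (real k ^ 3 - 1))"
      by (rule prod.inter_filter[symmetric]) simp
    also have "{k\<in>{..N}. prime k} = PN N" by (auto simp: PN_def)
    finally show ?thesis .
  qed
  ultimately show ?thesis by simp
qed

definition DD :: "(nat \<times> nat) set" where "DD = {(i,j). i > 0 \<and> j > 0}"

lemma Tg_has_sum_AP:
  assumes P: "finite P" "\<And>p. p \<in> P \<Longrightarrow> prime p"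
    and n: "n > 0" "prime_factors n \<subseteq> P" and ev2: "ev \<longrightarrow> 2 \<in> P"
  shows "(Tg s ev n has_sum (\<Prod>p\<in>P. infsum (gl s (ev \<and> p = 2) (multiplicity p n) p) UNIV)) (AP P)"
proof -
  have "((\<lambda>(i,j). \<Prod>p\<in>P. gl s (ev \<and> p = 2) (multiplicity p n) p (multiplicity p i, multiplicity p j)) has_sum
         (\<Prod>p\<in>P. infsum (gl s (ev \<and> p = 2) (multiplicity p n) p) UNIV)) (AP P)"
    by (rule euler_finite[OF P]) (use P(2) gl_summable in auto)
  thus ?thesis
  proof (rule has_sum_cong[THEN iffD1, rotated])
    fix x assume "x \<in> AP P"
    then obtain i j where x: "x = (i, j)" "(i, j) \<in> AP P" by (cases x) auto
    show "(\<lambda>(i,j). \<Prod>p\<in>P. gl s (ev \<and> p = 2) (multiplicity p n) p (multiplicity p i, multiplicity p j)) x = Tg s ev n x"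
      using Tg_factor[OF P x(2) n ev2] x(1) by simp
  qed
qed

lemma PN_prime: "p \<in> PN N \<Longrightarrow> prime p" by (simp add: PN_def)

lemma sub_AP:
  assumes "(i, j) \<in> DD" "i \<le> M" "j \<le> M"
  shows "(i, j) \<in> AP (PN M)"
proof -
  have "prime_factors m \<subseteq> PN M" if "m > 0" "m \<le> M" for m
  proof
    fix q assume "q \<in> prime_factors m"
    hence "prime q" "q dvd m" by (auto simp: in_prime_factors_iff)
    hence "q \<le> m" using that dvd_imp_le by blast
    thus "q \<in> PN M" using \<open>prime q\<close> that by (simp add: PN_def)
  qed
  thus ?thesis using assms by (auto simp: AP_def DD_def)
qed

lemma AP_sub: "AP P \<subseteq> DD" by (auto simp: AP_def DD_def)

lemma tele:
  assumes "M \<ge> 1"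
  shows "(\<Sum>k\<in>{2..M}. 1 / (real k * (real k - 1))) = 1 - 1 / real M"
  using assms
proof (induction M rule: nat_induct_at_least)
  case base
  then show ?case by simp
next
  case (Suc m)
  have "{2..Suc m} = insert (Suc m) {2..m}" using Suc by (auto)
  hence "(\<Sum>k\<in>{2..Suc m}. 1 / (real k * (real k - 1))) = 1 / (real (Suc m) * real m) + (1 - 1 / real m)"
    using Suc by simp
  also have "\<dots> = 1 - 1 / real (Suc m)"
  proof -
    have m0: "real m > 0" using Suc by simp
    have "real m + real m * real m > 0" using m0 by (simp add: add_pos_nonneg)
    thus ?thesis using m0 by (simp add: field_simps)
  qed
  finally show ?case .
qed

lemma Tg1_nonneg: "Tg 1 False 1 x \<ge> 0"
  by (cases x) (auto simp: Tg_def)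

lemma Tg1_AP_bound: "infsum (Tg 1 False 1) (AP (PN M)) \<le> exp 2"
proof -
  have "infsum (Tg 1 False 1) (AP (PN M)) = (\<Prod>p\<in>PN M. infsum (gl 1 (False \<and> p = 2) (multiplicity p 1) p) UNIV)"
    by (rule infsumI, rule Tg_has_sum_AP) (auto simp: PN_finite PN_prime)
  also have "\<dots> = (\<Prod>p\<in>PN M. infsum (gl 1 False 0 p) UNIV)" by simp
  also have "\<dots> \<le> (\<Prod>p\<in>PN M. exp (2 / (real p * (real p - 1))))"
  proof (rule prod_mono)
    fix p assume p: "p \<in> PN M"
    hence pp: "prime p" by (rule PN_prime)
    have "0 \<le> infsum (gl 1 False 0 p) UNIV"
      by (rule infsum_nonneg) (auto simp: gl_def)
    moreover have "infsum (gl 1 False 0 p) UNIV \<le> 1 + 2 / (real p * (real p - 1))" by (rule locabs[OF pp])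
    moreover have "1 + 2 / (real p * (real p - 1)) \<le> exp (2 / (real p * (real p - 1)))" by simp
    ultimately show "0 \<le> infsum (gl 1 False 0 p) UNIV \<and> infsum (gl 1 False 0 p) UNIV \<le> exp (2 / (real p * (real p - 1)))"
      by linarith
  qed
  also have "\<dots> = exp (\<Sum>p\<in>PN M. 2 / (real p * (real p - 1)))" by (simp add: exp_sum PN_finite)
  also have "\<dots> \<le> exp 2"
  proof -
    have "(\<Sum>p\<in>PN M. 2 / (real p * (real p - 1))) \<le> (\<Sum>p\<in>{2..M}. 2 / (real p * (real p - 1)))"
    proof (rule sum_mono2)
      show "PN M \<subseteq> {2..M}" by (auto simp: PN_def prime_ge_2_nat)
      show "\<And>b. b \<in> {2..M} - PN M \<Longrightarrow> 0 \<le> 2 / (real b * (real b - 1))" by auto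
    qed simp
    also have "\<dots> = 2 * (\<Sum>p\<in>{2..M}. 1 / (real p * (real p - 1)))" by (simp add: sum_distrib_left)
    also have "\<dots> \<le> 2"
    proof (cases "M \<ge> 1")
      case True
      then show ?thesis using tele[OF True] by simp
    next
      case False
      then show ?thesis by simp
    qed
    finally show ?thesis by simp
  qed
  finally show ?thesis .
qed

lemma Tg1_summable: "Tg 1 False 1 summable_on DD"
proof (rule nonneg_bdd_above_summable_on)
  show "\<And>x. x \<in> DD \<Longrightarrow> 0 \<le> Tg 1 False 1 x" by (rule Tg1_nonneg)
  show "bdd_above (sum (Tg 1 False 1) ` {F. F \<subseteq> DD \<and> finite F})"
  proof (rule bdd_aboveI2)
    fix F assume F: "F \<in> {F. F \<subseteq> DD \<and> finite F}"
    define M where "M = Max (insert 0 (fst ` F \<union> snd ` F))"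
    have FA: "F \<subseteq> AP (PN M)"
    proof
      fix x assume x: "x \<in> F"
      obtain i j where ij: "x = (i, j)" by (cases x)
      have "i \<le> M" "j \<le> M" using x F unfolding M_def ij
        by (auto intro!: Max_ge simp: image_iff) (metis fst_conv snd_conv)+
      thus "x \<in> AP (PN M)" using sub_AP[of i j M] x F ij by auto
    qed
    have sAP: "Tg 1 False 1 summable_on AP (PN M)"
      using Tg_has_sum_AP[of "PN M" 1 False 1] by (auto simp: PN_finite PN_prime summable_on_def)
    have "sum (Tg 1 False 1) F = infsum (Tg 1 False 1) F" using F by simp
    also have "\<dots> \<le> infsum (Tg 1 False 1) (AP (PN M))"
      by (rule infsum_mono_neutral) (use F FA sAP Tg1_nonneg in auto)
    also have "\<dots> \<le> exp 2" by (rule Tg1_AP_bound)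
    finally show "sum (Tg 1 False 1) F \<le> exp 2" .
  qed
qed

lemma Tg_abs_le: "\<bar>Tg (-1) ev n x\<bar> \<le> Tg 1 False 1 x"
proof (cases x)
  case (Pair i j)
  have "0 \<le> real i ^ 2 * real j * real (totient (i * j))" by simp
  then show ?thesis using Pair by (auto simp: Tg_def abs_divide)
qed

lemma Tg_summable: "Tg (-1) ev n summable_on DD"
proof -
  have "(\<lambda>x. norm (Tg (-1) ev n x)) summable_on DD"
    by (rule Infinite_Sum.abs_summable_on_comparison_test'[OF Tg1_summable]) (use Tg_abs_le in auto)
  thus ?thesis using summable_on_iff_abs_summable_on_real by blast
qed

lemma Lval:
  assumes p: "prime p" and n: "n > 0" and evn: "ev \<longrightarrow> odd n"
  shows "infsum (gl (-1) (ev \<and> p = 2) (multiplicity p n) p) UNIV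
     = (1 - real p / (real p ^ 3 - 1)) * (if p \<in> prime_factors n then rho n p else 1) * (if ev \<and> p = 2 then 3/10 else 1)"
proof (cases "ev \<and> p = 2")
  case True
  hence "odd n" "p = 2" using evn by auto
  hence m0: "multiplicity p n = 0" and np: "p \<notin> prime_factors n"
    by (auto intro: not_dvd_imp_multiplicity_0 simp: in_prime_factors_iff)
  show ?thesis using loc2 True m0 np \<open>p = 2\<close> by simp
next
  case False
  hence cF: "(ev \<and> p = 2) = False" by simp
  show ?thesis
  proof (cases "p \<in> prime_factors n")
    case True
    hence "multiplicity p n > 0" using n by (auto simp: prime_factors_multiplicity)
    then obtain m where m: "multiplicity p n = Suc m" by (cases "multiplicity p n") auto
    show ?thesis using loc1[OF p, of m] True m False by (cases ev) (simp_all add: rho_def)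
  next
    case f2: False
    hence m0: "multiplicity p n = 0" using n p by (auto simp: prime_factors_multiplicity)
    show ?thesis using loc0[OF p] f2 m0 False by (cases ev) simp_all
  qed
qed

lemma prod_AP_eq:
  assumes n: "n > 0" and evn: "ev \<longrightarrow> odd n" and N: "N \<ge> n + 2"
  shows "infsum (Tg (-1) ev n) (AP (PN N))
      = (\<Prod>p\<in>PN N. (1 - real p / (real p ^ 3 - 1))) * r_fun (int n) * (if ev then 3/10 else 1)"
proof -
  have pfn: "prime_factors n \<subseteq> PN N"
  proof
    fix q assume "q \<in> prime_factors n"
    hence "prime q" "q dvd n" by (auto simp: in_prime_factors_iff)
    hence "q \<le> n" using n dvd_imp_le by blast
    thus "q \<in> PN N" using \<open>prime q\<close> N by (simp add: PN_def)
  qed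
  have two: "2 \<in> PN N" using N by (simp add: PN_def)
  have "infsum (Tg (-1) ev n) (AP (PN N)) = (\<Prod>p\<in>PN N. infsum (gl (-1) (ev \<and> p = 2) (multiplicity p n) p) UNIV)"
    by (rule infsumI, rule Tg_has_sum_AP) (use PN_finite PN_prime n pfn two in auto)
  also have "\<dots> = (\<Prod>p\<in>PN N. (1 - real p / (real p ^ 3 - 1)) * (if p \<in> prime_factors n then rho n p else 1) * (if ev \<and> p = 2 then 3/10 else 1))"
    by (rule prod.cong[OF refl], rule Lval) (use PN_prime n evn in auto)
  also have "\<dots> = (\<Prod>p\<in>PN N. (1 - real p / (real p ^ 3 - 1))) * (\<Prod>p\<in>PN N. (if p \<in> prime_factors n then rho n p else 1)) * (\<Prod>p\<in>PN N. (if ev \<and> p = 2 then 3/10 else 1))"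
    by (simp add: prod.distrib)
  also have "(\<Prod>p\<in>PN N. (if p \<in> prime_factors n then rho n p else 1)) = (\<Prod>p\<in>{p\<in>PN N. p \<in> prime_factors n}. rho n p)"
    by (rule prod.inter_filter[symmetric]) (rule PN_finite)
  also have "{p\<in>PN N. p \<in> prime_factors n} = prime_factors n" using pfn by auto
  also have "(\<Prod>p\<in>prime_factors n. rho n p) = r_fun (int n)" using r_fun_eq[OF n] by simp
  also have "(\<Prod>p\<in>PN N. (if ev \<and> p = 2 then 3/10 else 1)) = (if ev then 3/10 else (1::real))"
  proof (cases ev)
    case True
    then show ?thesis using two PN_finite[of N] by (simp add: prod.delta)
  qed simp
  finally show ?thesis .
qed

lemma infsum_DD:
  assumes n: "n > 0" and evn: "ev \<longrightarrow> odd n"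
  shows "infsum (Tg (-1) ev n) DD = r_fun (int n) * S_const * (if ev then 3/10 else 1)"
proof -
  have l1: "(\<lambda>N. infsum (Tg (-1) ev n) (AP (PN N))) \<longlonglongrightarrow> infsum (Tg (-1) ev n) DD"
  proof (rule infsum_exhaust[OF Tg_summable AP_sub])
    fix K assume K: "finite K" "K \<subseteq> DD"
    define M where "M = Max (insert 0 (fst ` K \<union> snd ` K))"
    have "K \<subseteq> AP (PN N)" if "N \<ge> M" for N
    proof
      fix x assume x: "x \<in> K"
      obtain i j where ij: "x = (i, j)" by (cases x)
      have "i \<le> M" "j \<le> M" using x K unfolding M_def ij
        by (auto intro!: Max_ge simp: image_iff) (metis fst_conv snd_conv)+
      thus "x \<in> AP (PN N)" using sub_AP[of i j N] x K ij that by auto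
    qed
    thus "eventually (\<lambda>N. K \<subseteq> AP (PN N)) sequentially"
      unfolding eventually_sequentially by blast
  qed
  hence l2: "(\<lambda>N. infsum (Tg (-1) ev n) (AP (PN (N + (n + 2))))) \<longlonglongrightarrow> infsum (Tg (-1) ev n) DD"
    by (rule LIMSEQ_ignore_initial_segment)
  have l3: "(\<lambda>N. (\<Prod>p\<in>PN (N + (n + 2)). (1 - real p / (real p ^ 3 - 1))) * r_fun (int n) * (if ev then 3/10 else 1))
        \<longlonglongrightarrow> S_const * r_fun (int n) * (if ev then 3/10 else 1)"
    by (intro tendsto_mult tendsto_const LIMSEQ_ignore_initial_segment S_const_lim)
  have e: "(\<lambda>N. infsum (Tg (-1) ev n) (AP (PN (N + (n + 2))))) = (\<lambda>N. (\<Prod>p\<in>PN (N + (n + 2)). (1 - real p / (real p ^ 3 - 1))) * r_fun (int n) * (if ev then 3/10 else 1))"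
    by (rule ext, rule prod_AP_eq) (use n evn in auto)
  have l4: "(\<lambda>N. (\<Prod>p\<in>PN (N + (n + 2)). (1 - real p / (real p ^ 3 - 1))) * r_fun (int n) * (if ev then 3/10 else 1))
        \<longlonglongrightarrow> infsum (Tg (-1) ev n) DD" using l2 unfolding e .
  have "infsum (Tg (-1) ev n) DD = S_const * r_fun (int n) * (if ev then 3/10 else 1)"
    by (rule LIMSEQ_unique[OF l4 l3])
  thus ?thesis by simp
qed

lemma S_as_DD:
  assumes n: "n > 0"
  shows "(\<Sum>\<^sub>\<infinity>i\<in>{i::nat. i \<ge> 1 \<and> (ev \<longrightarrow> even i)}.
             \<Sum>\<^sub>\<infinity>j\<in>{j::nat. j \<ge> 1 \<and> n dvd i * j}.
               real_of_int (moebius_mu j) / (real i ^ 2 * real j * real (totient (i * j))))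
         = infsum (Tg (-1) ev n) DD"
proof -
  define f where "f i j = real_of_int (moebius_mu j) / (real i ^ 2 * real j * real (totient (i * j)))" for i j :: nat
  define Sg where "Sg = Sigma {i::nat. i \<ge> 1 \<and> (ev \<longrightarrow> even i)} (\<lambda>i. {j::nat. j \<ge> 1 \<and> n dvd i * j})"
  have SgD: "Sg \<subseteq> DD" by (auto simp: Sg_def DD_def)
  have eq: "(\<lambda>(i,j). f i j) x = Tg (-1) ev n x" if "x \<in> Sg" for x
  proof -
    obtain i j where x: "x = (i, j)" by (cases x)
    have j: "j > 0" using that x by (auto simp: Sg_def)
    show ?thesis using that x j by (auto simp: Sg_def f_def Tg_def moebius_mu_def)
  qed
  have zero: "Tg (-1) ev n x = 0" if "x \<in> DD - Sg" for x
  proof -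
    obtain i j where x: "x = (i, j)" by (cases x)
    show ?thesis using that x by (auto simp: Sg_def DD_def Tg_def)
  qed
  have sTg: "Tg (-1) ev n summable_on Sg" by (rule summable_on_subset_banach[OF Tg_summable SgD])
  have sf: "(\<lambda>(i,j). f i j) summable_on Sg"
    using sTg by (rule summable_on_cong[THEN iffD1, rotated]) (use eq in auto)
  have "(\<Sum>\<^sub>\<infinity>i\<in>{i::nat. i \<ge> 1 \<and> (ev \<longrightarrow> even i)}. \<Sum>\<^sub>\<infinity>j\<in>{j::nat. j \<ge> 1 \<and> n dvd i * j}. f i j)
      = infsum (\<lambda>(i,j). f i j) Sg"
    unfolding Sg_def by (rule infsum_Sigma'_banach) (use sf in \<open>simp add: Sg_def\<close>)
  also have "\<dots> = infsum (Tg (-1) ev n) Sg" by (rule infsum_cong) (rule eq)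
  also have "\<dots> = infsum (Tg (-1) ev n) DD"
    by (rule infsum_cong_neutral) (use zero SgD in auto)
  finally show ?thesis unfolding f_def .
qed

lemma Tg_4: assumes "4 dvd n" shows "Tg s True n = Tg s False n"
proof (rule ext)
  fix x :: "nat \<times> nat"
  obtain i j where x: "x = (i, j)" by (cases x)
  have "even i" if "n dvd i * j" "squarefree j"
  proof (rule ccontr)
    assume "odd i"
    have "4 dvd i * j" using assms that(1) dvd_trans by blast
    moreover have "coprime (4::nat) i"
      using \<open>odd i\<close> by (metis coprime_commute coprime_power_right_iff coprime_left_2_iff_odd power2_eq_square numeral_Bit0 one_add_one mult_2)
    ultimately have "4 dvd j" by (metis coprime_dvd_mult_right_iff)
    hence "2\<^sup>2 dvd j" by simp
    hence "is_unit (2::nat)" using that(2) unfolding squarefree_def by blast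
    thus False by simp
  qed
  thus "Tg s True n x = Tg s False n x" using x by (auto simp: Tg_def)
qed

theorem corollary4p3:
  fixes n :: nat
  assumes "n \<ge> 1"
  shows "S1 n = r_fun (int n) * S_const
         \<and> (odd n \<longrightarrow> S2' n = 3 / 10 * r_fun (int n) * S_const)
         \<and> (4 dvd n \<longrightarrow> S2' n = r_fun (int n) * S_const)"
proof -
  have n: "n > 0" using assms by simp
  have e1: "S1 n = infsum (Tg (-1) False n) DD"
    using S_as_DD[OF n, of False] unfolding S1_def by simp
  have e2: "S2' n = infsum (Tg (-1) True n) DD"
    using S_as_DD[OF n, of True] unfolding S2'_def by simp
  have r1: "S1 n = r_fun (int n) * S_const"
    using infsum_DD[OF n, of False] e1 by simp
  moreover have "odd n \<longrightarrow> S2' n = 3 / 10 * r_fun (int n) * S_const"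
    using infsum_DD[OF n, of True] e2 by simp
  moreover have "4 dvd n \<longrightarrow> S2' n = r_fun (int n) * S_const"
    using e1 e2 r1 Tg_4 by simp
  ultimately show ?thesis by blast
qed

end
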